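(* Let $\Omega\subset\mathbb R^n$ be a domain and let $u\in LSC(\Omega)\cap L^1(\omega_s)$ be a viscosity supersolution of $-\mathcal M^-_{\mathcal L}u\ge0$ in $\Omega$ with $u\ge0$ in $\mathbb R^n$. Then either $u>0$ in $\Omega$ or $u\equiv0$ in $\Omega$.
   Context: Fix $n\ge1$, $s\in(\tfrac12,1)$, $0<\lambda\le\Lambda$, $c^+>0$. $\omega_s(dy)=\min\{1,|y|^{-(n+2s)}\}dy$; $L^1(\omega_s)$ as usual. $\delta(u,x,y)=u(x+y)+u(x-y)-2u(x)$, $S^-(t)=\lambda t_+-\Lambda t_-$, $\mathcal M^-_{\mathcal K}u(x)=\int_{\mathbb R^n}S^-(\delta(u,x,y))|y|^{-(n+2s)}dy$, and $\mathcal M^-_{\mathcal L}u=\mathcal M^-_{\mathcal K}u-c^+|\nabla u|$. Viscosity supersolution: at each $x_0\in\Omega$, for every $C^2$ function $\varphi$ on a neighborhood $V\Subset\Omega$ of $x_0$ touching $u$ from below at $x_0$, the function equal to $\varphi$ in $V$ and $u$ outside $V$ satisfies the inequality at $x_0$. *)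

theory Defs
  imports "HOL-Analysis.Analysis"
begin

definition delta2 :: "('a::euclidean_space \<Rightarrow> real) \<Rightarrow> 'a \<Rightarrow> 'a \<Rightarrow> real" where
  "delta2 u x y = u (x + y) + u (x - y) - 2 * u x"

definition Sminus :: "real \<Rightarrow> real \<Rightarrow> real \<Rightarrow> real" where
  "Sminus lam Lam t = lam * max t 0 - Lam * max (- t) 0"

definition kern :: "real \<Rightarrow> 'a::euclidean_space \<Rightarrow> real" where
  "kern s y = norm y powr (- (real DIM('a) + 2 * s))"

definition omega_w :: "real \<Rightarrow> 'a::euclidean_space \<Rightarrow> real" where
  "omega_w s y = min 1 (kern s y)"

definition L1_omega :: "real \<Rightarrow> ('a::euclidean_space \<Rightarrow> real) \<Rightarrow> bool" where
  "L1_omega s u \<longleftrightarrow> u \<in> borel_measurable lebesgue \<and>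
     integrable lebesgue (\<lambda>y. \<bar>u y\<bar> * omega_w s y)"

definition MminusK :: "real \<Rightarrow> real \<Rightarrow> real \<Rightarrow> ('a::euclidean_space \<Rightarrow> real) \<Rightarrow> 'a \<Rightarrow> real" where
  "MminusK s lam Lam u x =
     integral\<^sup>L lebesgue (\<lambda>y. Sminus lam Lam (delta2 u x y) * kern s y)"

definition lsc_on :: "'a::topological_space set \<Rightarrow> ('a \<Rightarrow> real) \<Rightarrow> bool" where
  "lsc_on S u \<longleftrightarrow> (\<forall>x\<in>S. \<forall>t. t < u x \<longrightarrow> (\<forall>\<^sub>F y in at x within S. t < u y))"

definition C2_with :: "'a::euclidean_space set \<Rightarrow> ('a \<Rightarrow> real) \<Rightarrow> ('a \<Rightarrow> ('a \<Rightarrow>\<^sub>L real))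
     \<Rightarrow> ('a \<Rightarrow> ('a \<Rightarrow>\<^sub>L ('a \<Rightarrow>\<^sub>L real))) \<Rightarrow> bool" where
  "C2_with V \<phi> D D2 \<longleftrightarrow>
     (\<forall>x\<in>V. (\<phi> has_derivative blinfun_apply (D x)) (at x)) \<and>
     (\<forall>x\<in>V. (D has_derivative blinfun_apply (D2 x)) (at x)) \<and>
     continuous_on V D2"

text \<open>Viscosity supersolution of  - M^-_L u >= 0  in Omega, where
  M^-_L u = M^-_K u - c |grad u|.  The test function is phi on V and u outside V;
  |grad phi(x0)| is the operator norm of D x0 (= Euclidean norm of the gradient).\<close>
definition visc_super :: "real \<Rightarrow> real \<Rightarrow> real \<Rightarrow> real \<Rightarrow> 'a::euclidean_space set \<Rightarrow> ('a \<Rightarrow> real) \<Rightarrow> bool" where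
  "visc_super s lam Lam c \<Omega> u \<longleftrightarrow>
    (\<forall>x0\<in>\<Omega>. \<forall>V \<phi> D D2.
       open V \<and> x0 \<in> V \<and> compact (closure V) \<and> closure V \<subseteq> \<Omega> \<and>
       C2_with V \<phi> D D2 \<and> \<phi> x0 = u x0 \<and> (\<forall>x\<in>V. \<phi> x \<le> u x) \<longrightarrow>
       - (MminusK s lam Lam (\<lambda>x. if x \<in> V then \<phi> x else u x) x0 - c * norm (D x0)) \<ge> 0)"

end

theory Submission
  imports Defs
begin

lemma lebesgue_eq_distr_shift:
  fixes d :: "'a::euclidean_space" and m :: real
  assumes m: "m = 1 \<or> m = -1"
  shows "lebesgue = distr lebesgue lebesgue (\<lambda>x. d + m *\<^sub>R x)"
    and "(\<lambda>x. d + m *\<^sub>R x) \<in> lebesgue \<rightarrow>\<^sub>M lebesgue"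
proof -
  have eq: "(\<lambda>x. d + (\<Sum>j\<in>Basis. (m * (x \<bullet> j)) *\<^sub>R j)) = (\<lambda>x::'a. d + m *\<^sub>R x)"
    unfolding scaleR_scaleR[symmetric] scaleR_sum_right[symmetric]
    by (auto simp add: euclidean_representation)
  have c: "\<And>j. j \<in> (Basis::'a set) \<Longrightarrow> m \<noteq> 0" using m by auto
  have pr: "(\<Prod>j\<in>(Basis::'a set). \<bar>m\<bar>) = 1" using m by auto
  show "lebesgue = distr lebesgue lebesgue (\<lambda>x. d + m *\<^sub>R x)"
    using lebesgue_affine_euclidean[of "\<lambda>_. m" d, OF c] unfolding eq pr
    by (simp add: density_1)
  show "(\<lambda>x. d + m *\<^sub>R x) \<in> lebesgue \<rightarrow>\<^sub>M lebesgue"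
    using lebesgue_affine_measurable[of "\<lambda>_. m" d, OF c] unfolding eq .
qed

lemma integrable_shift:
  fixes d :: "'a::euclidean_space" and m :: real and f :: "'a \<Rightarrow> real"
  assumes m: "m = 1 \<or> m = -1" and f: "integrable lebesgue f"
  shows "integrable lebesgue (\<lambda>x. f (d + m *\<^sub>R x))"
proof -
  have fm: "f \<in> borel_measurable lebesgue" using f by auto
  have "integrable (distr lebesgue lebesgue (\<lambda>x. d + m *\<^sub>R x)) f"
    using f lebesgue_eq_distr_shift(1)[OF m, of d] by simp
  then show ?thesis
    using integrable_distr_eq[OF lebesgue_eq_distr_shift(2)[OF m] fm] by simp
qed

lemma measurable_shift:
  fixes d :: "'a::euclidean_space" and m :: real and f :: "'a \<Rightarrow> real"
  assumes m: "m = 1 \<or> m = -1" and f: "f \<in> borel_measurable lebesgue"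
  shows "(\<lambda>x. f (d + m *\<^sub>R x)) \<in> borel_measurable lebesgue"
  using measurable_compose[OF lebesgue_eq_distr_shift(2)[OF m] f] by (simp add: o_def)

lemma lebesgue_ball_pos:
  fixes c :: "'a::euclidean_space"
  assumes "r > 0"
  shows "emeasure lebesgue (ball c r) > 0"
proof -
  have "emeasure lborel (cball c (r/2)) > 0"
    using assms by (simp add: emeasure_cball)
  also have "emeasure lborel (cball c (r/2)) \<le> emeasure lborel (ball c r)"
    using assms by (intro emeasure_mono) auto
  finally show ?thesis by simp
qed

lemma kern_bound:
  fixes y z x0 :: "'a::euclidean_space"
  assumes s: "s > 0" and r: "r > 0" and ny: "norm y \<ge> r" and z: "z \<noteq> 0"
    and nz: "norm z \<le> norm x0 + norm y"
  shows "kern s y \<le> (max 1 (r powr (- (real DIM('a) + 2 * s))) /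
            ((1 + norm x0 / r) powr (- (real DIM('a) + 2 * s)))) * omega_w s z"
proof -
  define p where "p = real DIM('a) + 2 * s"
  have p: "p > 0" using s by (simp add: p_def add_pos_pos)
  define b where "b = 1 + norm x0 / r"
  have b1: "b \<ge> 1" using r by (simp add: b_def)
  define a where "a = b powr (-p)"
  have a0: "a > 0" using b1 by (simp add: a_def)
  have a1: "a \<le> 1" unfolding a_def using b1 p
    by (simp add: powr_minus_divide divide_simps) (metis ge_one_powr_ge_zero less_le)
  have yp: "norm y > 0" using ny r by linarith
  have "norm x0 \<le> norm x0 * norm y / r" using ny r
    by (simp add: divide_simps mult_left_mono)
  hence nzb: "norm z \<le> b * norm y" using nz yp r by (simp add: b_def algebra_simps)
  have "(b * norm y) powr (-p) \<le> norm z powr (-p)"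
    using z nzb p by (intro powr_mono2') auto
  hence kz: "a * kern s y \<le> kern s z"
    using b1 yp by (simp add: kern_def p_def[symmetric] a_def powr_mult)
  define M where "M = max 1 (r powr (-p))"
  have ky: "kern s y \<le> M * min 1 (kern s y)"
  proof (cases "kern s y \<le> 1")
    case True then show ?thesis unfolding M_def
      by (simp add: kern_def mult_le_cancel_right1)
  next
    case False
    have "kern s y \<le> r powr (-p)" unfolding kern_def p_def[symmetric]
      using ny r p by (intro powr_mono2') auto
    then show ?thesis using False by (simp add: M_def)
  qed
  have "a * min 1 (kern s y) \<le> min 1 (kern s z)"
  proof -
    have k0: "kern s y \<ge> 0" by (simp add: kern_def)
    have "a * min 1 (kern s y) \<le> a" using a0 by (simp add: mult_left_le_one_le)
    also have "\<dots> \<le> 1" by (rule a1)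
    finally have A: "a * min 1 (kern s y) \<le> 1" .
    have "a * min 1 (kern s y) \<le> a * kern s y" using a0 by (intro mult_left_mono) auto
    with kz have "a * min 1 (kern s y) \<le> kern s z" by linarith
    with A show ?thesis by simp
  qed
  hence "M * min 1 (kern s y) \<le> M / a * min 1 (kern s z)"
  proof -
    have M0: "M > 0" by (simp add: M_def)
    have "M * min 1 (kern s y) = M / a * (a * min 1 (kern s y))" using a0 by simp
    also have "\<dots> \<le> M / a * min 1 (kern s z)"
      using M0 a0 \<open>a * min 1 (kern s y) \<le> min 1 (kern s z)\<close> by (intro mult_left_mono) auto
    finally show ?thesis .
  qed
  with ky show ?thesis unfolding omega_w_def M_def a_def b_def p_def by linarith
qed

theorem theorem2p8:
  fixes s lam Lam c :: real and \<Omega> :: "'a::euclidean_space set" and u :: "'a \<Rightarrow> real"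
  assumes "1/2 < s" "s < 1" "0 < lam" "lam \<le> Lam" "0 < c"
    and "open \<Omega>" "connected \<Omega>"
    and "lsc_on \<Omega> u" "L1_omega s u"
    and "visc_super s lam Lam c \<Omega> u"
    and "\<forall>x. 0 \<le> u x"
  shows "(\<forall>x\<in>\<Omega>. 0 < u x) \<or> (\<forall>x\<in>\<Omega>. u x = 0)"
proof (rule ccontr)
  have s0: "s > 0" using assms(1) by linarith
  have lam: "lam > 0" by (rule assms(3))
  have u0: "\<And>z. 0 \<le> u z" using assms(11) by auto
  assume "\<not> ?thesis"
  then obtain x0 x where x0: "x0 \<in> \<Omega>" "\<not> 0 < u x0" and x: "x \<in> \<Omega>" "u x \<noteq> 0" by auto
  have ux0: "u x0 = 0" using x0 u0[of x0] by linarith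
  have ux: "u x > 0" using x u0[of x] by linarith
  have xx0: "x \<noteq> x0" using ux ux0 by auto
  define d where "d = dist x x0"
  have d: "d > 0" using xx0 by (simp add: d_def)
  obtain e where e: "e > 0" "cball x0 e \<subseteq> \<Omega>"
    using open_contains_cball assms(6) x0(1) by blast
  define r where "r = min e (d/2)"
  have r: "r > 0" using e d by (simp add: r_def)
  define V where "V = ball x0 r"
  define w where "w = (\<lambda>z. if z \<in> V then 0 else u z)"
  have x0V: "x0 \<in> V" using r by (simp add: V_def)
  have clV: "closure V = cball x0 r" using r by (simp add: V_def)
  have clVO: "closure V \<subseteq> \<Omega>" using e clV r_def by auto
  have C2: "C2_with V (\<lambda>_. 0) (\<lambda>_. 0) (\<lambda>_. 0)"
    unfolding C2_with_def by (auto simp: zero_blinfun.rep_eq)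
  have "- (MminusK s lam Lam (\<lambda>z. if z \<in> V then (\<lambda>_. 0::real) z else u z) x0
           - c * norm ((\<lambda>_. 0::'a \<Rightarrow>\<^sub>L real) x0)) \<ge> 0"
    using assms(10) x0(1) unfolding visc_super_def
    apply (elim ballE allE[of _ V] allE[of _ "\<lambda>_. 0"] allE[of _ "\<lambda>_. 0"] allE[of _ "\<lambda>_. 0"])
    using C2 clVO clV x0V ux0 u0 by (auto simp: V_def)
  hence Mle: "MminusK s lam Lam w x0 \<le> 0" by (simp add: w_def)
  define F where "F = (\<lambda>y. Sminus lam Lam (delta2 w x0 y) * kern s y)"
  have w0: "\<And>z. 0 \<le> w z" using u0 by (simp add: w_def)
  have wx0: "w x0 = 0" using x0V by (simp add: w_def)
  have Feq: "F y = lam * (w (x0 + y) + w (x0 - y)) * kern s y" for y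
    using w0[of "x0+y"] w0[of "x0-y"] wx0
    by (simp add: F_def Sminus_def delta2_def)
  have kpos: "\<And>y. 0 \<le> kern s y" by (simp add: kern_def)
  have F0: "0 \<le> F y" for y unfolding Feq using lam w0[of "x0+y"] w0[of "x0-y"] kpos[of y]
    by (intro mult_nonneg_nonneg add_nonneg_nonneg) auto
  have um: "u \<in> borel_measurable lebesgue" using assms(9) by (simp add: L1_omega_def)
  have Vm: "V \<in> sets lebesgue" by (simp add: V_def)
  have wm: "w \<in> borel_measurable lebesgue" unfolding w_def
    using um Vm by measurable
  have km: "(kern s :: 'a \<Rightarrow> real) \<in> borel_measurable lebesgue" unfolding kern_def[abs_def]
  proof (intro powr_real_measurable measurable_const)
    show "(\<lambda>y::'a. norm y) \<in> borel_measurable lebesgue"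
      by (rule measurable_completion) simp
  qed simp
  have w1: "(\<lambda>y. w (x0 + y)) \<in> borel_measurable lebesgue"
    using measurable_shift[of 1 w x0] wm by simp
  have w2: "(\<lambda>y. w (x0 - y)) \<in> borel_measurable lebesgue"
    using measurable_shift[of "-1" w x0] wm by simp
  have Fm: "F \<in> borel_measurable lebesgue" unfolding Feq[abs_def]
    using w1 w2 km by measurable
  define g where "g = (\<lambda>z. \<bar>u z\<bar> * omega_w s z)"
  have gi: "integrable lebesgue g" using assms(9) by (simp add: L1_omega_def g_def)
  define K where "K = (max 1 (r powr (- (real DIM('a) + 2 * s))) /
            ((1 + norm x0 / r) powr (- (real DIM('a) + 2 * s))))"
  define G where "G = (\<lambda>y. K * lam * (g (x0 + y) + g (x0 - y)))"
  have Gi: "integrable lebesgue G"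
    using integrable_shift[of 1 g x0, OF _ gi] integrable_shift[of "-1" g x0, OF _ gi]
    unfolding G_def by simp
  have AE1: "AE y in lebesgue. y \<noteq> x0" by (rule AE_completion[OF AE_lborel_singleton])
  have AE2: "AE y in lebesgue. y \<noteq> -x0" by (rule AE_completion[OF AE_lborel_singleton])
  have K0: "K \<ge> 0" by (simp add: K_def)
  have om0: "\<And>z. omega_w s z \<ge> 0" by (simp add: omega_w_def kern_def)
  have G0: "0 \<le> G y" for y unfolding G_def g_def using K0 lam om0[of "x0+y"] om0[of "x0-y"]
    by (intro mult_nonneg_nonneg add_nonneg_nonneg) auto
  have bnd: "F y \<le> G y" if y1: "y \<noteq> x0" and y2: "y \<noteq> -x0" for y
  proof (cases "norm y < r")
    case True
    hence "x0 + y \<in> V" "x0 - y \<in> V" by (auto simp: V_def dist_norm)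
    hence "F y = 0" by (simp add: Feq w_def)
    then show ?thesis using G0 by simp
  next
    case False
    hence ny: "norm y \<ge> r" by simp
    have z1: "x0 + y \<noteq> 0" using y2 by (metis add.commute add_eq_0_iff)
    have z2: "x0 - y \<noteq> 0" using y1 by simp
    have k1: "kern s y \<le> K * omega_w s (x0 + y)"
      unfolding K_def by (rule kern_bound[OF s0 r ny z1]) (rule norm_triangle_ineq)
    have k2: "kern s y \<le> K * omega_w s (x0 - y)"
      unfolding K_def by (rule kern_bound[OF s0 r ny z2]) (rule norm_triangle_ineq4)
    have a1: "w (x0 + y) * kern s y \<le> \<bar>u (x0 + y)\<bar> * (K * omega_w s (x0 + y))"
      using k1 kpos[of y] w0[of "x0+y"] u0[of "x0+y"]
      by (intro mult_mono) (auto simp: w_def)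
    have a2: "w (x0 - y) * kern s y \<le> \<bar>u (x0 - y)\<bar> * (K * omega_w s (x0 - y))"
      using k2 kpos[of y] w0[of "x0-y"] u0[of "x0-y"]
      by (intro mult_mono) (auto simp: w_def)
    have "F y = lam * (w (x0 + y) * kern s y + w (x0 - y) * kern s y)"
      by (simp add: Feq algebra_simps)
    also have "\<dots> \<le> lam * (\<bar>u (x0 + y)\<bar> * (K * omega_w s (x0 + y)) + \<bar>u (x0 - y)\<bar> * (K * omega_w s (x0 - y)))"
      using a1 a2 lam by (intro mult_left_mono) auto
    also have "\<dots> = G y" by (simp add: G_def g_def algebra_simps)
    finally show ?thesis .
  qed
  have Fi: "integrable lebesgue F"
  proof (rule Bochner_Integration.integrable_bound[OF Gi Fm])
    show "AE y in lebesgue. norm (F y) \<le> norm (G y)"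
      using AE1 AE2 by eventually_elim (use bnd F0 G0 in auto)
  qed
  have "integral\<^sup>L lebesgue F = MminusK s lam Lam w x0" by (simp add: F_def MminusK_def)
  moreover have "0 \<le> integral\<^sup>L lebesgue F" by (rule integral_nonneg_AE) (simp add: F0)
  ultimately have "integral\<^sup>L lebesgue F = 0" using Mle by auto
  hence AEF: "AE y in lebesgue. F y = 0"
    using integral_nonneg_eq_0_iff_AE[OF Fi] F0 by auto
  define t where "t = u x / 2"
  have "t < u x" using ux by (simp add: t_def)
  hence "\<forall>\<^sub>F z in at x within \<Omega>. t < u z" using assms(8) x(1) by (simp add: lsc_on_def)
  then obtain \<delta> where \<delta>: "\<delta> > 0" "\<And>z. z \<in> \<Omega> \<Longrightarrow> z \<noteq> x \<Longrightarrow> dist z x < \<delta> \<Longrightarrow> t < u z"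
    unfolding eventually_at by blast
  obtain \<delta>2 where \<delta>2: "\<delta>2 > 0" "ball x \<delta>2 \<subseteq> \<Omega>"
    using open_contains_ball assms(6) x(1) by blast
  define eps where "eps = min (min \<delta> \<delta>2) (d/2)"
  have eps: "eps > 0" using \<delta> \<delta>2 d by (simp add: eps_def)
  have Fpos: "F y \<noteq> 0" if y: "y \<in> ball (x - x0) eps" for y
  proof -
    define z where "z = x0 + y"
    have dz: "dist z x < eps" using y by (simp add: z_def dist_norm algebra_simps norm_minus_commute)
    have zO: "z \<in> \<Omega>" using dz \<delta>2 by (auto simp: eps_def dist_commute)
    have tz: "t < u z"
    proof (cases "z = x")
      case True then show ?thesis using \<open>t < u x\<close> by simp
    next
      case False then show ?thesis using \<delta>(2)[OF zO False] dz by (simp add: eps_def)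
    qed
    have "dist x0 x \<le> dist x0 z + dist z x" by (rule dist_triangle)
    hence "dist x0 z > d/2" using dz by (simp add: d_def dist_commute eps_def)
    hence zV: "z \<notin> V" by (auto simp: V_def r_def)
    hence y0: "y \<noteq> 0" using x0V by (auto simp: z_def)
    have "kern s y > 0" using y0 by (simp add: kern_def)
    moreover have "w (x0 + y) > 0" using zV tz ux by (simp add: w_def z_def t_def)
    ultimately have "F y > 0" unfolding Feq using lam w0[of "x0-y"] by simp
    then show ?thesis by simp
  qed
  from AEF obtain N where N: "{y \<in> space lebesgue. F y \<noteq> 0} \<subseteq> N" "emeasure lebesgue N = 0"
    "N \<in> sets lebesgue" by (auto elim: AE_E)
  have "ball (x - x0) eps \<subseteq> N" using N(1) Fpos by auto
  hence "emeasure lebesgue (ball (x - x0) eps) \<le> emeasure lebesgue N"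
    using N(3) by (intro emeasure_mono) auto
  with N(2) lebesgue_ball_pos[OF eps, of "x - x0"] show False by simp
qed

end
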